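(* Assume conditions (i)–(vii) listed in the context. For $R>0$ let $K^R_\lambda=\{\lambda\in K_\lambda:\ \max_{t\in[0,\tau]}|\lambda(t)|\le R\}$ and $K^R=K^R_\lambda\times\Theta_\beta$. Then there exists a nonrandom $R_0>\max_{t}\lambda_0(t)$ such that for every $R\ge R_0$, almost surely there is $n_0$ such that for all $n\ge n_0$, $$\sup_{(\lambda,\beta)\in K^R}Q_n^{cor}(\lambda,\beta)>\sup_{(\lambda,\beta)\in K\setminus K^R}Q_n^{cor}(\lambda,\beta).$$ More precisely, $\limsup_{n\to\infty}\sup_{(\lambda,\beta)\in K\setminus K^R}Q_n^{cor}(\lambda,\beta)\to-\infty$ as $R\to+\infty$, almost surely.
   Context: Model: a lifetime $T$ has conditional hazard $\lambda(t\mid X)=\lambda_0(t)\exp(\beta_0^TX)$, $t\ge 0$, given a random covariate $X\in\mathbb R^m$, where $\lambda_0\in C[0,\tau]$ is the baseline hazard and $\beta_0\in\mathbb R^m$. A censor $C$ takes values in $[0,\tau]$. One observes $Y=\min\{T,C\}$, $\Delta=I_{\{T\le C\}}$ and $W=X+U$, where the measurement error $U$ has known moment generating function $M_U(z)=\mathsf E e^{z^TU}$; $(T,X)$, $C$ and $U$ are mutually independent. The data $(Y_i,\Delta_i,W_i)$, $i=1,\dots,n$, come from i.i.d. copies of the model. Objective function: $$Q_n^{cor}(\lambda,\beta)=\frac1n\sum_{i=1}^n q(Y_i,\Delta_i,W_i;\lambda,\beta),\quad q(Y,\Delta,W;\lambda,\beta)=\Delta(\log\lambda(Y)+\beta^TW)-\frac{\exp(\beta^TW)}{M_U(\beta)}\int_0^Y\lambda(u)\,du,$$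 with the convention that if $\lambda(Y)=0$ then $\Delta\log\lambda(Y)=0$ when $\Delta=0$ and $=-\infty$ when $\Delta=1$. Conditions: (i) $K_\lambda=\{f:[0,\tau]\to\mathbb R:\ f(t)\ge0\ \forall t,\ |f(t)-f(s)|\le L|t-s|\ \forall t,s\in[0,\tau]\}$ for a fixed constant $L>0$. (ii) $\Theta_\beta\subset\mathbb R^m$ is compact. (iii) $\mathsf EU=0$ and $\mathsf E e^{D\|U\|}<\infty$ where $D=\max_{\beta\in\Theta_\beta}\|\beta\|+\epsilon$ for some $\epsilon>0$. (iv) $\mathsf E e^{D\|X\|}<\infty$. (v) $\mathsf P(C>\tau)=0$ and $\mathsf P(C>\tau-\epsilon)>0$ for all $\epsilon>0$. (vi) The covariance matrix of $X$ is positive definite. (vii) $(\lambda_0,\beta_0)\in K:=K_\lambda\times\Theta_\beta$ and $\lambda_0(t)>0$ for all $t\in[0,\tau]$. *)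

theory Defs
  imports "HOL-Probability.Probability"
begin

text \<open>Parameter space for the baseline hazard: nonnegative L-Lipschitz functions on [0,tau].
  Functions are represented as real => real; only their values on [0,tau] matter.\<close>
definition Klam :: "real \<Rightarrow> real \<Rightarrow> (real \<Rightarrow> real) set" where
  "Klam L \<tau> = {f. (\<forall>t\<in>{0..\<tau>}. 0 \<le> f t) \<and>
                   (\<forall>t\<in>{0..\<tau>}. \<forall>s\<in>{0..\<tau>}. \<bar>f t - f s\<bar> \<le> L * \<bar>t - s\<bar>)}"

definition KlamR :: "real \<Rightarrow> real \<Rightarrow> real \<Rightarrow> (real \<Rightarrow> real) set" where
  "KlamR L \<tau> R = {f \<in> Klam L \<tau>. \<forall>t\<in>{0..\<tau>}. \<bar>f t\<bar> \<le> R}"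

definition mgf :: "'w measure \<Rightarrow> ('w \<Rightarrow> real^'m) \<Rightarrow> real^'m \<Rightarrow> real" where
  "mgf M U z = (\<integral>\<omega>. exp (z \<bullet> U \<omega>) \<partial>M)"

definition covmat :: "'w measure \<Rightarrow> ('w \<Rightarrow> real^'m) \<Rightarrow> 'm \<Rightarrow> 'm \<Rightarrow> real" where
  "covmat M X i j = (\<integral>\<omega>. (X \<omega> $ i - (\<integral>\<omega>'. X \<omega>' $ i \<partial>M)) *
                            (X \<omega> $ j - (\<integral>\<omega>'. X \<omega>' $ j \<partial>M)) \<partial>M)"

text \<open>The contribution q(Y,Delta,W;lambda,beta), with values in the extended reals
  (Delta log lambda(Y) = -infinity if Delta = 1 and lambda(Y) = 0, and = 0 if Delta = 0).\<close>
definition qcor :: "(real^'m \<Rightarrow> real) \<Rightarrow> real \<Rightarrow> bool \<Rightarrow> real^'m \<Rightarrow>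
                    (real \<Rightarrow> real) \<Rightarrow> real^'m \<Rightarrow> ereal" where
  "qcor MU y d w lam b =
     (if d then (if lam y = 0 then -\<infinity> else ereal (ln (lam y) + b \<bullet> w)) else 0)
     - ereal (exp (b \<bullet> w) / MU b * integral {0..y} lam)"

definition Qcor :: "'w measure \<Rightarrow> (nat \<Rightarrow> 'w \<Rightarrow> real) \<Rightarrow> (nat \<Rightarrow> 'w \<Rightarrow> real^'m) \<Rightarrow>
                    (nat \<Rightarrow> 'w \<Rightarrow> real) \<Rightarrow> (nat \<Rightarrow> 'w \<Rightarrow> real^'m) \<Rightarrow>
                    nat \<Rightarrow> (real \<Rightarrow> real) \<Rightarrow> real^'m \<Rightarrow> 'w \<Rightarrow> ereal" where
  "Qcor M T X C U n lam b \<omega> =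
     ereal (1 / real n) *
       (\<Sum>i<n. qcor (mgf M (U 0)) (min (T i \<omega>) (C i \<omega>)) (T i \<omega> \<le> C i \<omega>)
                    (X i \<omega> + U i \<omega>) lam b)"

definition indep_rv :: "'w measure \<Rightarrow> ('w \<Rightarrow> 'a::topological_space) \<Rightarrow> ('w \<Rightarrow> 'b::topological_space) \<Rightarrow> bool" where
  "indep_rv M X Y \<longleftrightarrow> (\<forall>A\<in>sets borel. \<forall>B\<in>sets borel.
     measure M {\<omega> \<in> space M. X \<omega> \<in> A \<and> Y \<omega> \<in> B}
     = measure M {\<omega> \<in> space M. X \<omega> \<in> A} * measure M {\<omega> \<in> space M. Y \<omega> \<in> B})"

end

theory Submission
  imports Defs
begin

lemma iid_integral:
  fixes f :: "'b::topological_space \<Rightarrow> real" and \<xi> :: "nat \<Rightarrow> 'a \<Rightarrow> 'b"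
  assumes "\<xi> i \<in> borel_measurable M" "\<xi> 0 \<in> borel_measurable M"
    "distr M borel (\<xi> i) = distr M borel (\<xi> 0)" "f \<in> borel_measurable borel"
  shows "(\<integral>\<omega>. f (\<xi> i \<omega>) \<partial>M) = (\<integral>\<omega>. f (\<xi> 0 \<omega>) \<partial>M)"
proof -
  have "(\<integral>\<omega>. f (\<xi> i \<omega>) \<partial>M) = integral\<^sup>L (distr M borel (\<xi> i)) f"
    by (rule integral_distr[symmetric]) (use assms in auto)
  also have "\<dots> = integral\<^sup>L (distr M borel (\<xi> 0)) f" by (simp only: assms(3))
  also have "\<dots> = (\<integral>\<omega>. f (\<xi> 0 \<omega>) \<partial>M)" by (rule integral_distr) (use assms in auto)
  finally show ?thesis .
qed

lemma iid_integrable: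
  fixes f :: "'b::topological_space \<Rightarrow> real" and \<xi> :: "nat \<Rightarrow> 'a \<Rightarrow> 'b"
  assumes "\<xi> i \<in> borel_measurable M" "\<xi> 0 \<in> borel_measurable M"
    "distr M borel (\<xi> i) = distr M borel (\<xi> 0)" "f \<in> borel_measurable borel"
    "integrable M (\<lambda>\<omega>. f (\<xi> 0 \<omega>))"
  shows "integrable M (\<lambda>\<omega>. f (\<xi> i \<omega>))"
proof -
  have "integrable (distr M borel (\<xi> 0)) f" using assms by (simp add: integrable_distr_eq)
  then have "integrable (distr M borel (\<xi> i)) f" by (simp only: assms(3))
  then show ?thesis using integrable_distr_eq[of "\<xi> i" M borel f] assms by simp
qed

lemma iid_measure:
  fixes \<xi> :: "nat \<Rightarrow> 'a \<Rightarrow> 'b::topological_space"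
  assumes "\<xi> i \<in> borel_measurable M" "\<xi> 0 \<in> borel_measurable M"
    "distr M borel (\<xi> i) = distr M borel (\<xi> 0)" "A \<in> sets borel"
  shows "measure M {\<omega>\<in>space M. \<xi> i \<omega> \<in> A} = measure M {\<omega>\<in>space M. \<xi> 0 \<omega> \<in> A}"
proof -
  have "measure M {\<omega>\<in>space M. \<xi> i \<omega> \<in> A} = measure (distr M borel (\<xi> i)) A"
    using assms by (subst measure_distr) (auto intro!: arg_cong[where f="measure M"])
  also have "\<dots> = measure (distr M borel (\<xi> 0)) A" by (simp only: assms(3))
  also have "\<dots> = measure M {\<omega>\<in>space M. \<xi> 0 \<omega> \<in> A}"
    using assms by (subst measure_distr) (auto intro!: arg_cong[where f="measure M"])
  finally show ?thesis .
qed

lemma indep_pair: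
  assumes P: "prob_space M" and ind: "prob_space.indep_vars M (\<lambda>_. borel) \<xi> UNIV" and ij: "i \<noteq> j"
  shows "prob_space.indep_var M borel (\<xi> i) borel (\<xi> j)"
proof -
  interpret prob_space M by fact
  have "indep_var (PiM {i} (\<lambda>_. borel)) (\<lambda>\<omega>. restrict (\<lambda>k. \<xi> k \<omega>) {i})
                  (PiM {j} (\<lambda>_. borel)) (\<lambda>\<omega>. restrict (\<lambda>k. \<xi> k \<omega>) {j})"
    using ij by (intro indep_var_restrict[OF ind]) auto
  then have "indep_var borel ((\<lambda>x. x i) \<circ> (\<lambda>\<omega>. restrict (\<lambda>k. \<xi> k \<omega>) {i}))
                  borel ((\<lambda>x. x j) \<circ> (\<lambda>\<omega>. restrict (\<lambda>k. \<xi> k \<omega>) {j}))"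
    by (rule indep_var_compose) (auto intro: measurable_component_singleton)
  then show ?thesis by (simp add: comp_def)
qed

lemma indep_fun_integral:
  fixes f g :: "'b::topological_space \<Rightarrow> real"
  assumes P: "prob_space M" and ind: "prob_space.indep_var M borel X borel Y"
    and f: "f \<in> borel_measurable borel" and g: "g \<in> borel_measurable borel"
    and intf: "integrable M (\<lambda>\<omega>. f (X \<omega>))" and intg: "integrable M (\<lambda>\<omega>. g (Y \<omega>))"
  shows "(\<integral>\<omega>. f (X \<omega>) * g (Y \<omega>) \<partial>M) = (\<integral>\<omega>. f (X \<omega>) \<partial>M) * (\<integral>\<omega>. g (Y \<omega>) \<partial>M)"
    and "integrable M (\<lambda>\<omega>. f (X \<omega>) * g (Y \<omega>))"
proof -
  interpret prob_space M by fact
  have i2: "indep_var borel (f \<circ> X) borel (g \<circ> Y)"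
    by (rule indep_var_compose[OF ind f g])
  show "(\<integral>\<omega>. f (X \<omega>) * g (Y \<omega>) \<partial>M) = (\<integral>\<omega>. f (X \<omega>) \<partial>M) * (\<integral>\<omega>. g (Y \<omega>) \<partial>M)"
    using indep_var_lebesgue_integral[OF i2] intf intg by (simp add: comp_def)
  show "integrable M (\<lambda>\<omega>. f (X \<omega>) * g (Y \<omega>))"
    using indep_var_integrable[OF i2] intf intg by (simp add: comp_def)
qed

lemma cheb_sum:
  fixes \<xi> :: "nat \<Rightarrow> 'a \<Rightarrow> 'b::topological_space" and g :: "'b \<Rightarrow> real"
  assumes P: "prob_space M" and m\<xi>: "\<And>i. \<xi> i \<in> borel_measurable M"
   and ind: "\<And>i j. i \<noteq> j \<Longrightarrow> prob_space.indep_var M borel (\<xi> i) borel (\<xi> j)"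
   and dist: "\<And>i. distr M borel (\<xi> i) = distr M borel (\<xi> 0)"
   and g: "g \<in> borel_measurable borel" and gb: "\<And>x. \<bar>g x\<bar> \<le> b" and a: "0 < a"
  shows "measure M {\<omega>\<in>space M. a \<le> \<bar>(\<Sum>i<N. g (\<xi> i \<omega>)) - real N * (\<integral>\<omega>. g (\<xi> 0 \<omega>) \<partial>M)\<bar>}
          \<le> real N * (\<integral>\<omega>. (g (\<xi> 0 \<omega>))^2 \<partial>M) / a^2"
proof -
  interpret prob_space M by fact
  define \<mu> where "\<mu> = (\<integral>\<omega>. g (\<xi> 0 \<omega>) \<partial>M)"
  define h where "h = (\<lambda>x. g x - \<mu>)"
  have hm[measurable]: "h \<in> borel_measurable borel" using g unfolding h_def by measurable
  have gm[measurable]: "g \<in> borel_measurable borel" by fact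
  have m\<xi>'[measurable]: "\<xi> i \<in> borel_measurable M" for i by (rule m\<xi>)
  have hb: "\<bar>h x\<bar> \<le> b + \<bar>\<mu>\<bar>" for x using gb[of x] unfolding h_def by linarith
  have int_bdd: "integrable M (\<lambda>\<omega>. f (\<xi> i \<omega>))"
    if "f \<in> borel_measurable borel" "\<And>x. \<bar>f x\<bar> \<le> c" for f :: "'b \<Rightarrow> real" and c i
    by (rule integrable_const_bound[where B=c]) (use that in auto)
  have intg: "integrable M (\<lambda>\<omega>. g (\<xi> i \<omega>))" for i by (rule int_bdd[OF g gb])
  have inth: "integrable M (\<lambda>\<omega>. h (\<xi> i \<omega>))" for i by (rule int_bdd[OF hm hb])
  have hsq_b: "\<bar>(h x)^2\<bar> \<le> (b + \<bar>\<mu>\<bar>)^2" for x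
    using hb[of x] by (simp add: abs_le_square_iff[symmetric] power_mono)
  have inth2: "integrable M (\<lambda>\<omega>. (h (\<xi> i \<omega>))^2)" for i
    by (rule int_bdd[OF _ hsq_b]) measurable
  have intg2: "integrable M (\<lambda>\<omega>. (g (\<xi> i \<omega>))^2)" for i
  proof -
    have "\<bar>(g x)^2\<bar> \<le> b^2" for x using gb[of x] by (simp add: abs_le_square_iff[symmetric] power_mono)
    then show ?thesis by (intro int_bdd[of "\<lambda>x. (g x)^2" "b^2"]) auto
  qed
  have Eg: "(\<integral>\<omega>. g (\<xi> i \<omega>) \<partial>M) = \<mu>" for i
    unfolding \<mu>_def by (rule iid_integral[of \<xi> i M g, OF m\<xi> m\<xi> dist g])
  have Eh: "(\<integral>\<omega>. h (\<xi> i \<omega>) \<partial>M) = 0" for i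
    unfolding h_def using Eg[of i] intg[of i] by (simp add: prob_space)
  have Ehh: "(\<integral>\<omega>. h (\<xi> i \<omega>) * h (\<xi> j \<omega>) \<partial>M) = (if i = j then (\<integral>\<omega>. (h (\<xi> 0 \<omega>))^2 \<partial>M) else 0)"
    for i j
  proof (cases "i = j")
    case True
    have "(\<integral>\<omega>. h (\<xi> i \<omega>) * h (\<xi> j \<omega>) \<partial>M) = (\<integral>\<omega>. (\<lambda>x. (h x)^2) (\<xi> i \<omega>) \<partial>M)"
      using True by (simp add: power2_eq_square)
    also have "\<dots> = (\<integral>\<omega>. (\<lambda>x. (h x)^2) (\<xi> 0 \<omega>) \<partial>M)"
      by (rule iid_integral[of \<xi> i M, OF m\<xi> m\<xi> dist]) measurable
    finally show ?thesis using True by simp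
  next
    case False
    then show ?thesis
      using indep_fun_integral(1)[OF P ind[OF False] hm hm inth inth] Eh by simp
  qed
  define S where "S \<omega> = (\<Sum>i<N. h (\<xi> i \<omega>))" for \<omega>
  have Seq: "(\<Sum>i<N. g (\<xi> i \<omega>)) - real N * \<mu> = S \<omega>" for \<omega>
    unfolding S_def h_def by (simp add: sum_subtractf)
  have S2: "(S \<omega>)^2 = (\<Sum>i<N. \<Sum>j<N. h (\<xi> i \<omega>) * h (\<xi> j \<omega>))" for \<omega>
    unfolding S_def power2_eq_square by (simp add: sum_product)
  have inthh: "integrable M (\<lambda>\<omega>. h (\<xi> i \<omega>) * h (\<xi> j \<omega>))" for i j
  proof (rule integrable_const_bound[where B="(b + \<bar>\<mu>\<bar>)^2"])
    show "AE x in M. norm (h (\<xi> i x) * h (\<xi> j x)) \<le> (b + \<bar>\<mu>\<bar>)^2"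
    proof (intro AE_I2)
      fix x
      have "0 \<le> b + \<bar>\<mu>\<bar>" using order.trans[OF abs_ge_zero hb] .
      then show "norm (h (\<xi> i x) * h (\<xi> j x)) \<le> (b + \<bar>\<mu>\<bar>)^2"
        using hb[of "\<xi> i x"] hb[of "\<xi> j x"]
        by (simp add: abs_mult power2_eq_square mult_mono)
    qed
  qed measurable
  have intS2: "integrable M (\<lambda>\<omega>. (S \<omega>)^2)"
    unfolding S2 using inthh by (intro Bochner_Integration.integrable_sum) auto
  have ES2: "(\<integral>\<omega>. (S \<omega>)^2 \<partial>M) = real N * (\<integral>\<omega>. (h (\<xi> 0 \<omega>))^2 \<partial>M)"
  proof -
    have "(\<integral>\<omega>. (S \<omega>)^2 \<partial>M) = (\<Sum>i<N. \<Sum>j<N. (\<integral>\<omega>. h (\<xi> i \<omega>) * h (\<xi> j \<omega>) \<partial>M))"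
      unfolding S2 using inthh
      by (simp add: Bochner_Integration.integral_sum Bochner_Integration.integrable_sum)
    also have "\<dots> = (\<Sum>i<N. (\<integral>\<omega>. (h (\<xi> 0 \<omega>))^2 \<partial>M))"
      unfolding Ehh by (simp add: sum.delta)
    finally show ?thesis by simp
  qed
  have Eh2: "(\<integral>\<omega>. (h (\<xi> 0 \<omega>))^2 \<partial>M) \<le> (\<integral>\<omega>. (g (\<xi> 0 \<omega>))^2 \<partial>M)"
  proof -
    have "(\<integral>\<omega>. (h (\<xi> 0 \<omega>))^2 \<partial>M) = variance (\<lambda>\<omega>. g (\<xi> 0 \<omega>))"
      unfolding h_def \<mu>_def ..
    also have "\<dots> = (\<integral>\<omega>. (g (\<xi> 0 \<omega>))^2 \<partial>M) - \<mu>^2"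
      unfolding \<mu>_def by (rule variance_eq[OF intg intg2])
    finally show ?thesis by simp
  qed
  have seteq: "{\<omega>\<in>space M. a \<le> \<bar>(\<Sum>i<N. g (\<xi> i \<omega>)) - real N * \<mu>\<bar>} = {\<omega>\<in>space M. (S \<omega>)^2 \<ge> a^2}"
  proof -
    have "a \<le> \<bar>S \<omega>\<bar> \<longleftrightarrow> a^2 \<le> (S \<omega>)^2" for \<omega>
      using abs_le_square_iff[of a "S \<omega>"] a by simp
    then show ?thesis unfolding Seq by simp
  qed
  have mk: "measure M {\<omega>\<in>space M. (S \<omega>)^2 \<ge> a^2} \<le> (\<integral>\<omega>. (S \<omega>)^2 \<partial>M) / a^2"
    by (rule integral_Markov_inequality_measure[OF intS2]) (use a in \<open>auto simp: S_def\<close>)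
  have "(\<integral>\<omega>. (S \<omega>)^2 \<partial>M) / a^2 \<le> real N * (\<integral>\<omega>. (g (\<xi> 0 \<omega>))^2 \<partial>M) / a^2"
    unfolding ES2 using Eh2 by (intro divide_right_mono mult_left_mono) auto
  then show ?thesis using mk seteq unfolding \<mu>_def by simp
qed

lemma pow2_bracket:
  fixes n :: nat assumes "1 \<le> n" shows "\<exists>k. 2^k \<le> n \<and> n < 2^(Suc k)"
  using assms
proof (induction n rule: dec_induct)
  case base then show ?case by (intro exI[of _ 0]) auto
next
  case (step n)
  then obtain k where k: "2^k \<le> n" "n < 2^(Suc k)" by blast
  show ?case
  proof (cases "Suc n < 2^(Suc k)")
    case True then show ?thesis using k by (intro exI[of _ k]) auto
  next
    case False
    then have "Suc n = 2^Suc k" using k by simp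
    then show ?thesis by (intro exI[of _ "Suc k"]) auto
  qed
qed

lemma sum_mono_upto:
  fixes z :: "nat \<Rightarrow> real"
  assumes "\<And>i. 0 \<le> z i" "m \<le> n"
  shows "(\<Sum>i<m. z i) \<le> (\<Sum>i<n. z i)"
  by (rule sum_mono2) (use assms in auto)

lemma slln_lower:
  fixes \<xi> :: "nat \<Rightarrow> 'a \<Rightarrow> 'b::topological_space" and g :: "'b \<Rightarrow> real"
  assumes P: "prob_space M" and m\<xi>: "\<And>i. \<xi> i \<in> borel_measurable M"
   and ind: "\<And>i j. i \<noteq> j \<Longrightarrow> prob_space.indep_var M borel (\<xi> i) borel (\<xi> j)"
   and dist: "\<And>i. distr M borel (\<xi> i) = distr M borel (\<xi> 0)"
   and g: "g \<in> borel_measurable borel" and g0: "\<And>x. 0 \<le> g x" and gb: "\<And>x. g x \<le> b"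
   and pos: "0 < (\<integral>\<omega>. g (\<xi> 0 \<omega>) \<partial>M)"
  shows "AE \<omega> in M. eventually (\<lambda>n. (\<integral>\<omega>. g (\<xi> 0 \<omega>) \<partial>M) / 4 * real n \<le> (\<Sum>i<n. g (\<xi> i \<omega>))) sequentially"
proof -
  interpret prob_space M by fact
  define \<mu> where "\<mu> = (\<integral>\<omega>. g (\<xi> 0 \<omega>) \<partial>M)"
  define c where "c = (\<integral>\<omega>. (g (\<xi> 0 \<omega>))^2 \<partial>M)"
  have gm[measurable]: "g \<in> borel_measurable borel" by fact
  have m\<xi>'[measurable]: "\<xi> i \<in> borel_measurable M" for i by (rule m\<xi>)
  have gab: "\<bar>g x\<bar> \<le> b" for x using g0[of x] gb[of x] by simp
  have mu: "0 < \<mu>" using pos unfolding \<mu>_def .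
  define A where "A k = {\<omega>\<in>space M. \<mu> * 2^k / 2 \<le> \<bar>(\<Sum>i<2^k. g (\<xi> i \<omega>)) - real (2^k) * \<mu>\<bar>}" for k :: nat
  have Am[measurable]: "A k \<in> sets M" for k unfolding A_def by measurable
  have Ab: "measure M (A k) \<le> (4 * c / \<mu>^2) * (1/2)^k" for k
  proof -
    have "measure M (A k) \<le> real (2^k) * c / (\<mu> * 2^k / 2)^2"
      unfolding A_def c_def \<mu>_def
      by (rule cheb_sum[of M \<xi>, OF P m\<xi> ind dist g gab]) (use pos in auto)
    also have "\<dots> = (4 * c / \<mu>^2) * (1/2)^k"
      using mu by (simp add: field_simps power2_eq_square power_divide)
    finally show ?thesis .
  qed
  have summ: "summable (\<lambda>k. measure M (A k))"
    by (rule summable_comparison_test[where g="\<lambda>k. (4 * c / \<mu>^2) * (1/2)^k"])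
       (use Ab in \<open>auto intro!: summable_mult summable_geometric\<close>)
  have "AE \<omega> in M. eventually (\<lambda>k. \<omega> \<in> space M - A k) sequentially"
    by (rule borel_cantelli_AE1[OF Am _ summ]) (simp add: emeasure_eq_measure)
  then show ?thesis unfolding \<mu>_def[symmetric]
  proof (rule AE_mp, intro AE_I2 impI)
    fix \<omega> assume \<omega>: "\<omega> \<in> space M" and ev: "eventually (\<lambda>k. \<omega> \<in> space M - A k) sequentially"
    then obtain K where K: "\<And>k. k \<ge> K \<Longrightarrow> \<omega> \<notin> A k" unfolding eventually_sequentially by blast
    have lowk: "\<mu> * 2^k / 2 \<le> (\<Sum>i<2^k. g (\<xi> i \<omega>))" if "k \<ge> K" for k
    proof -
      have "\<bar>(\<Sum>i<2^k. g (\<xi> i \<omega>)) - real (2^k) * \<mu>\<bar> < \<mu> * 2^k / 2"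
        using K[OF that] \<omega> unfolding A_def by auto
      moreover have "real (2^k) = 2^k" by simp
      ultimately show ?thesis by (simp only: abs_less_iff mult.commute[of "2^k" \<mu>]) linarith
    qed
    show "eventually (\<lambda>n. \<mu> / 4 * real n \<le> (\<Sum>i<n. g (\<xi> i \<omega>))) sequentially"
      unfolding eventually_sequentially
    proof (intro exI[of _ "2^K"] allI impI)
      fix n :: nat assume n: "2^K \<le> n"
      then have "1 \<le> n" using one_le_power[of "2::nat" K] by linarith
      then obtain k where k: "2^k \<le> n" "n < 2^(Suc k)" using pow2_bracket by blast
      have "K \<le> k"
      proof (rule ccontr)
        assume "\<not> K \<le> k"
        then have "2^(Suc k) \<le> (2::nat)^K" by (intro power_increasing) auto
        then show False using n k by linarith
      qed
      have "real n \<le> real (2^(Suc k))" using k(2) by linarith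
      then have "\<mu> / 4 * real n \<le> \<mu> / 4 * real (2^(Suc k))"
        using mu by (intro mult_left_mono) auto
      also have "\<dots> = \<mu> * 2^k / 2" by simp
      also have "\<dots> \<le> (\<Sum>i<2^k. g (\<xi> i \<omega>))" by (rule lowk[OF \<open>K \<le> k\<close>])
      also have "\<dots> \<le> (\<Sum>i<n. g (\<xi> i \<omega>))" by (rule sum_mono_upto) (use g0 k in auto)
      finally show "\<mu> / 4 * real n \<le> (\<Sum>i<n. g (\<xi> i \<omega>))" .
    qed
  qed
qed

lemma pow2_powr: "(2^k::real) powr a = (2 powr a)^k"
proof (induction k)
  case 0 then show ?case by simp
next
  case (Suc k)
  have "(2^Suc k::real) powr a = (2 * 2^k) powr a" by simp
  also have "\<dots> = 2 powr a * (2^k) powr a" by (rule powr_mult)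
  finally show ?case using Suc by simp
qed

lemma slln_upper:
  fixes \<xi> :: "nat \<Rightarrow> 'a \<Rightarrow> 'b::topological_space" and f :: "'b \<Rightarrow> real"
  assumes P: "prob_space M" and m\<xi>: "\<And>i. \<xi> i \<in> borel_measurable M"
   and ind: "\<And>i j. i \<noteq> j \<Longrightarrow> prob_space.indep_var M borel (\<xi> i) borel (\<xi> j)"
   and dist: "\<And>i. distr M borel (\<xi> i) = distr M borel (\<xi> 0)"
   and f: "f \<in> borel_measurable borel" and f0: "\<And>x. 0 \<le> f x"
   and p1: "1 < p" and p2: "p \<le> 2"
   and intp: "integrable M (\<lambda>\<omega>. f (\<xi> 0 \<omega>) powr p)"
   and int1: "integrable M (\<lambda>\<omega>. f (\<xi> 0 \<omega>))"
  shows "AE \<omega> in M. eventually (\<lambda>n. (\<Sum>i<n. f (\<xi> i \<omega>)) \<le> 2 * ((\<integral>\<omega>. f (\<xi> 0 \<omega>) \<partial>M) + 1) * real n) sequentially"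
proof -
  interpret prob_space M by fact
  define \<mu> where "\<mu> = (\<integral>\<omega>. f (\<xi> 0 \<omega>) \<partial>M)"
  define c where "c = (\<integral>\<omega>. f (\<xi> 0 \<omega>) powr p \<partial>M)"
  have fm[measurable]: "f \<in> borel_measurable borel" by fact
  have m\<xi>'[measurable]: "\<xi> i \<in> borel_measurable M" for i by (rule m\<xi>)
  have mu0: "0 \<le> \<mu>" unfolding \<mu>_def using f0 by (simp add: integral_nonneg_AE)
  have c0: "0 \<le> c" unfolding c_def by (simp add: integral_nonneg_AE)
  define q where "q = (2::real) powr (1 - p)"
  have q0: "0 \<le> q" "q < 1" unfolding q_def using p1 by (auto intro: powr_less_one)
  define A where "A k = {\<omega>\<in>space M. 2^k * (\<mu> + 1) < (\<Sum>i<2^k. f (\<xi> i \<omega>))}" for k :: nat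
  have Am[measurable]: "A k \<in> sets M" for k unfolding A_def by measurable
  have Ab: "measure M (A k) \<le> (2 * c) * q^k" for k
  proof -
    define N :: nat where "N = 2^k"
    define r :: real where "r = 2^k"
    have rN: "real N = r" unfolding N_def r_def by simp
    have r1: "1 \<le> r" unfolding r_def by simp
    define g where "g x = (if f x \<le> r then f x else 0)" for x
    have gm[measurable]: "g \<in> borel_measurable borel" unfolding g_def by measurable
    have g0: "0 \<le> g x" for x unfolding g_def using f0[of x] by simp
    have gr: "\<bar>g x\<bar> \<le> r" for x unfolding g_def using f0[of x] r1 by auto
    have gf: "g x \<le> f x" for x unfolding g_def using f0[of x] by auto
    have intg: "integrable M (\<lambda>\<omega>. g (\<xi> 0 \<omega>))"
      by (rule integrable_const_bound[where B=r]) (use gr r1 in auto)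
    have Eg: "(\<integral>\<omega>. g (\<xi> 0 \<omega>) \<partial>M) \<le> \<mu>"
      unfolding \<mu>_def by (rule integral_mono[OF intg int1]) (rule gf)
    have g2: "(g x)^2 \<le> r powr (2 - p) * f x powr p" for x
    proof (cases "f x \<le> r \<and> f x \<noteq> 0")
      case True
      then have "(g x)^2 = f x powr p * f x powr (2 - p)"
        unfolding g_def using f0[of x] by (simp add: powr_add[symmetric] powr_realpow' power2_eq_square) 
      also have "\<dots> \<le> f x powr p * r powr (2 - p)"
        using True p2 f0[of x] by (intro mult_left_mono powr_mono2) auto
      finally show ?thesis by (simp add: mult.commute)
    next
      case False
      then have "g x = 0" unfolding g_def by auto
      then show ?thesis by simp
    qed
    have intg2: "integrable M (\<lambda>\<omega>. (g (\<xi> 0 \<omega>))^2)"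
      by (rule integrable_const_bound[where B="r^2"]) (use gr r1 in \<open>auto simp: abs_le_square_iff[symmetric]\<close>)
    have Eg2: "(\<integral>\<omega>. (g (\<xi> 0 \<omega>))^2 \<partial>M) \<le> r powr (2 - p) * c"
    proof -
      have "(\<integral>\<omega>. (g (\<xi> 0 \<omega>))^2 \<partial>M) \<le> (\<integral>\<omega>. r powr (2 - p) * f (\<xi> 0 \<omega>) powr p \<partial>M)"
        by (rule integral_mono[OF intg2]) (use intp g2 in auto)
      also have "\<dots> = r powr (2 - p) * c" unfolding c_def by simp
      finally show ?thesis .
    qed
    define B where "B = (\<Union>i\<in>{..<N}. {\<omega>\<in>space M. r < f (\<xi> i \<omega>)})"
    define C where "C = {\<omega>\<in>space M. r \<le> \<bar>(\<Sum>i<N. g (\<xi> i \<omega>)) - real N * (\<integral>\<omega>. g (\<xi> 0 \<omega>) \<partial>M)\<bar>}"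
    have Bm[measurable]: "B \<in> sets M" unfolding B_def by measurable
    have Cm[measurable]: "C \<in> sets M" unfolding C_def by measurable
    have sub: "A k \<subseteq> B \<union> C"
    proof
      fix \<omega> assume \<omega>: "\<omega> \<in> A k"
      show "\<omega> \<in> B \<union> C"
      proof (rule ccontr)
        assume "\<omega> \<notin> B \<union> C"
        then have nB: "\<And>i. i < N \<Longrightarrow> f (\<xi> i \<omega>) \<le> r" and nC: "\<bar>(\<Sum>i<N. g (\<xi> i \<omega>)) - r * (\<integral>\<omega>. g (\<xi> 0 \<omega>) \<partial>M)\<bar> < r"
          using \<omega> unfolding A_def B_def C_def rN by (auto simp: not_less)
        have "(\<Sum>i<N. f (\<xi> i \<omega>)) = (\<Sum>i<N. g (\<xi> i \<omega>))"
          using nB unfolding g_def by (intro sum.cong) auto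
        also have "\<dots> < r * (\<integral>\<omega>. g (\<xi> 0 \<omega>) \<partial>M) + r" using nC by (simp add: abs_less_iff)
        also have "\<dots> \<le> r * \<mu> + r" using Eg r1 by (simp add: mult_left_mono)
        finally have "(\<Sum>i<N. f (\<xi> i \<omega>)) < r * (\<mu> + 1)" by (simp add: algebra_simps)
        then show False using \<omega> unfolding A_def N_def r_def by (auto simp: mult.commute)
      qed
    qed
    have mB: "measure M B \<le> c * r powr (1 - p)"
    proof -
      have "measure M B \<le> (\<Sum>i<N. measure M {\<omega>\<in>space M. r < f (\<xi> i \<omega>)})"
        unfolding B_def by (rule finite_measure_subadditive_finite) auto
      also have "\<dots> = (\<Sum>i<N. measure M {\<omega>\<in>space M. \<xi> 0 \<omega> \<in> {x. r < f x}})"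
      proof (intro sum.cong refl)
        fix i
        have "measure M {\<omega>\<in>space M. \<xi> i \<omega> \<in> {x. r < f x}} = measure M {\<omega>\<in>space M. \<xi> 0 \<omega> \<in> {x. r < f x}}"
          by (rule iid_measure[of \<xi> i M, OF m\<xi> m\<xi> dist]) measurable
        then show "measure M {\<omega>\<in>space M. r < f (\<xi> i \<omega>)} = measure M {\<omega>\<in>space M. \<xi> 0 \<omega> \<in> {x. r < f x}}"
          by simp
      qed
      also have "\<dots> = r * measure M {\<omega>\<in>space M. r < f (\<xi> 0 \<omega>)}" using rN by simp
      also have "\<dots> \<le> r * (c / r powr p)"
      proof (rule mult_left_mono)
        have "measure M {\<omega>\<in>space M. r < f (\<xi> 0 \<omega>)} \<le> measure M {\<omega>\<in>space M. r powr p \<le> f (\<xi> 0 \<omega>) powr p}"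
          using p1 r1 by (intro finite_measure_mono) (auto intro!: powr_mono2)
        also have "\<dots> \<le> c / r powr p"
          unfolding c_def by (rule integral_Markov_inequality_measure[OF intp]) (use r1 in auto)
        finally show "measure M {\<omega>\<in>space M. r < f (\<xi> 0 \<omega>)} \<le> c / r powr p" .
      qed (use r1 in auto)
      also have "\<dots> = c * r powr (1 - p)"
        using r1 by (simp add: powr_diff powr_one)
      finally show ?thesis .
    qed
    have mC: "measure M C \<le> c * r powr (1 - p)"
    proof -
      have "measure M C \<le> real N * (\<integral>\<omega>. (g (\<xi> 0 \<omega>))^2 \<partial>M) / r^2"
        unfolding C_def by (rule cheb_sum[of M \<xi>, OF P m\<xi> ind dist gm gr]) (use r1 in auto)
      also have "\<dots> \<le> r * (r powr (2 - p) * c) / r^2"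
        unfolding rN using Eg2 r1 by (intro divide_right_mono mult_left_mono) auto
      also have "\<dots> = c * r powr (1 - p)"
        using r1 by (simp add: powr_diff powr_realpow power2_eq_square field_simps)
      finally show ?thesis .
    qed
    have "measure M (A k) \<le> measure M (B \<union> C)" by (rule finite_measure_mono[OF sub]) simp
    also have "\<dots> \<le> measure M B + measure M C" by (rule measure_Un_le) auto
    also have "\<dots> \<le> 2 * c * r powr (1 - p)" using mB mC by simp
    also have "\<dots> = 2 * c * q^k" unfolding r_def q_def by (simp add: pow2_powr)
    finally show ?thesis by simp
  qed
  have summ: "summable (\<lambda>k. measure M (A k))"
    by (rule summable_comparison_test[where g="\<lambda>k. (2 * c) * q^k"])
       (use Ab q0 in \<open>auto intro!: summable_mult summable_geometric\<close>)
  have "AE \<omega> in M. eventually (\<lambda>k. \<omega> \<in> space M - A k) sequentially"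
    by (rule borel_cantelli_AE1[OF Am _ summ]) (simp add: emeasure_eq_measure)
  then show ?thesis unfolding \<mu>_def[symmetric]
  proof (rule AE_mp, intro AE_I2 impI)
    fix \<omega> assume \<omega>: "\<omega> \<in> space M" and ev: "eventually (\<lambda>k. \<omega> \<in> space M - A k) sequentially"
    then obtain K where K: "\<And>k. k \<ge> K \<Longrightarrow> \<omega> \<notin> A k" unfolding eventually_sequentially by blast
    have upk: "(\<Sum>i<2^k. f (\<xi> i \<omega>)) \<le> 2^k * (\<mu> + 1)" if "k \<ge> K" for k
      using K[OF that] \<omega> unfolding A_def by auto
    show "eventually (\<lambda>n. (\<Sum>i<n. f (\<xi> i \<omega>)) \<le> 2 * (\<mu> + 1) * real n) sequentially"
      unfolding eventually_sequentially
    proof (intro exI[of _ "2^K"] allI impI)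
      fix n :: nat assume n: "2^K \<le> n"
      then have "1 \<le> n" using one_le_power[of "2::nat" K] by linarith
      then obtain k where k: "2^k \<le> n" "n < 2^(Suc k)" using pow2_bracket by blast
      have "K \<le> Suc k"
      proof (rule ccontr)
        assume "\<not> K \<le> Suc k"
        then have "2^(Suc k) \<le> (2::nat)^K" by (intro power_increasing) auto
        then show False using n k by linarith
      qed
      have "(\<Sum>i<n. f (\<xi> i \<omega>)) \<le> (\<Sum>i<2^Suc k. f (\<xi> i \<omega>))"
        by (rule sum_mono_upto) (use f0 k in auto)
      also have "\<dots> \<le> 2^Suc k * (\<mu> + 1)" by (rule upk[OF \<open>K \<le> Suc k\<close>])
      also have "\<dots> = 2 * (\<mu> + 1) * 2^k" by simp
      also have "\<dots> \<le> 2 * (\<mu> + 1) * real n"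
      proof -
        have "(2::real)^k \<le> real n" using k(1) by (metis of_nat_le_iff of_nat_numeral of_nat_power)
        then show ?thesis using mu0 by (intro mult_left_mono) auto
      qed
      finally show "(\<Sum>i<n. f (\<xi> i \<omega>)) \<le> 2 * (\<mu> + 1) * real n" .
    qed
  qed
qed

lemma Klam_cont:
  assumes "lam \<in> Klam L \<tau>" "0 \<le> L"
  shows "continuous_on {0..\<tau>} lam"
proof -
  have "L-lipschitz_on {0..\<tau>} lam"
    using assms unfolding Klam_def by (intro lipschitz_onI) (auto simp: dist_real_def)
  then show ?thesis by (rule lipschitz_on_continuous_on)
qed

lemma Klam_lower_int:
  assumes lam: "lam \<in> Klam L \<tau>" and L: "0 \<le> L" and t: "t \<in> {0..\<tau>}" and y: "0 \<le> y" "y \<le> \<tau>"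
  shows "(lam t - L * \<tau>) * y \<le> integral {0..y} lam"
proof -
  have c: "continuous_on {0..y} lam" by (rule continuous_on_subset[OF Klam_cont[OF lam L]]) (use y in auto)
  have "integral {0..y} (\<lambda>u. lam t - L * \<tau>) \<le> integral {0..y} lam"
  proof (rule integral_le)
    show "lam integrable_on {0..y}" by (rule integrable_continuous_interval[OF c])
    fix u assume u: "u \<in> {0..y}"
    then have "\<bar>lam t - lam u\<bar> \<le> L * \<bar>t - u\<bar>" using lam t y unfolding Klam_def by auto
    moreover have "L * \<bar>t - u\<bar> \<le> L * \<tau>" using u t y L by (intro mult_left_mono) auto
    ultimately show "lam t - L * \<tau> \<le> lam u" by linarith
  qed (rule integrable_continuous_interval[OF continuous_on_const])
  then show ?thesis using y by (simp add: mult.commute)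
qed

lemma qcor_upper:
  fixes w b :: "real^'m"
  assumes lam: "lam \<in> Klam L \<tau>" and L: "0 \<le> L" and t: "t \<in> {0..\<tau>}"
    and mL: "L * \<tau> \<le> lam t" and m1: "1 \<le> lam t"
    and y: "0 \<le> y" "y \<le> \<tau>"
    and MU: "0 < MU b" "MU b \<le> Mx"
    and b: "norm b \<le> Bm" "0 \<le> Bm" "Bm \<le> a"
    and w: "norm w \<le> V"
  shows "qcor MU y d w lam b \<le> ereal (ln (lam t + L * \<tau>) + exp (a * V) - (lam t - L * \<tau>) / Mx * (exp (- Bm * V) * y))"
proof -
  define E where "E = exp (b \<bullet> w) / MU b * integral {0..y} lam"
  have V0: "0 \<le> V" using w norm_ge_zero order.trans by blast
  have bw: "\<bar>b \<bullet> w\<bar> \<le> Bm * V"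
    using Cauchy_Schwarz_ineq2[of b w] b w by (meson mult_mono norm_ge_zero order.trans)
  have bwa: "b \<bullet> w \<le> exp (a * V)"
  proof -
    have "Bm * V \<le> a * V" using b V0 by (intro mult_right_mono) auto
    moreover have "a * V \<le> exp (a * V)" using exp_ge_add_one_self[of "a * V"] by linarith
    ultimately show ?thesis using bw by linarith
  qed
  have Mx: "0 < Mx" using MU by linarith
  have E: "(lam t - L * \<tau>) / Mx * (exp (- Bm * V) * y) \<le> E"
  proof -
    have e1: "exp (- Bm * V) \<le> exp (b \<bullet> w)" using bw by simp
    have e2: "1 / Mx \<le> 1 / MU b" using MU by (simp add: frac_le)
    have e3: "(lam t - L * \<tau>) * y \<le> integral {0..y} lam" by (rule Klam_lower_int[OF lam L t y])
    have "(lam t - L * \<tau>) / Mx * (exp (- Bm * V) * y) = exp (- Bm * V) * (1 / Mx) * ((lam t - L * \<tau>) * y)"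
      by (simp add: field_simps)
    also have "\<dots> \<le> exp (b \<bullet> w) * (1 / MU b) * integral {0..y} lam"
      using e1 e2 e3 mL y Mx MU by (intro mult_mono) auto
    also have "\<dots> = E" unfolding E_def by simp
    finally show ?thesis .
  qed
  have ln0: "0 \<le> ln (lam t + L * \<tau>)"
  proof (rule ln_ge_zero)
    have "0 \<le> L * \<tau>" using L t by (intro mult_nonneg_nonneg) auto
    then show "1 \<le> lam t + L * \<tau>" using m1 by linarith
  qed
  show ?thesis
  proof (cases "d")
    case False
    then have "qcor MU y d w lam b = - ereal E" unfolding qcor_def E_def by simp
    also have "\<dots> = ereal (- E)" by simp
    also have "\<dots> \<le> ereal (ln (lam t + L * \<tau>) + exp (a * V) - (lam t - L * \<tau>) / Mx * (exp (- Bm * V) * y))"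
      unfolding ereal_less_eq(3) using E ln0 exp_gt_zero[of "a * V"] by linarith
    finally show ?thesis .
  next
    case True
    show ?thesis
    proof (cases "lam y = 0")
      case True
      then show ?thesis unfolding qcor_def using \<open>d\<close> by simp
    next
      case False
      have ly: "0 < lam y" using False lam y unfolding Klam_def by force
      have "\<bar>lam y - lam t\<bar> \<le> L * \<bar>y - t\<bar>" using lam t y unfolding Klam_def by auto
      moreover have "L * \<bar>y - t\<bar> \<le> L * \<tau>" using t y L by (intro mult_left_mono) auto
      ultimately have "lam y \<le> lam t + L * \<tau>" by linarith
      then have lnl: "ln (lam y) \<le> ln (lam t + L * \<tau>)" using ly by simp
      have "qcor MU y d w lam b = ereal (ln (lam y) + b \<bullet> w - E)"
        unfolding qcor_def E_def using \<open>d\<close> False by simp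
      also have "\<dots> \<le> ereal (ln (lam t + L * \<tau>) + exp (a * V) - (lam t - L * \<tau>) / Mx * (exp (- Bm * V) * y))"
        using lnl bwa E by simp
      finally show ?thesis .
    qed
  qed
qed

lemma qcor_lower:
  fixes w b :: "real^'m"
  assumes y: "y \<le> \<tau>" "0 \<le> \<tau>" and MU: "0 < MU b" and b: "norm b \<le> a" and w: "norm w \<le> V"
  shows "ereal (- (1 + \<tau> / MU b) * exp (a * V)) \<le> qcor MU y d w (\<lambda>_. 1) b"
proof -
  have V0: "0 \<le> V" using w norm_ge_zero order.trans by blast
  have a0: "0 \<le> a" using b norm_ge_zero order.trans by blast
  have bw: "\<bar>b \<bullet> w\<bar> \<le> a * V"
    using Cauchy_Schwarz_ineq2[of b w] b w by (meson mult_mono norm_ge_zero order.trans)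
  have aV: "a * V \<le> exp (a * V)" using exp_ge_add_one_self[of "a * V"] by linarith
  have int1: "integral {0..y} (\<lambda>_. 1::real) \<le> \<tau>" using y by auto
  have int0: "0 \<le> integral {0..y} (\<lambda>_. 1::real)" by auto
  have "exp (b \<bullet> w) / MU b * integral {0..y} (\<lambda>_. 1) \<le> exp (a * V) / MU b * \<tau>"
    using bw MU int1 int0 by (intro mult_mono divide_right_mono) auto
  then have E: "exp (b \<bullet> w) / MU b * integral {0..y} (\<lambda>_. 1) \<le> \<tau> / MU b * exp (a * V)"
    by (simp only: mult.commute divide_inverse mult.assoc mult.left_commute)
  have ex: "0 < exp (a * V)" by simp
  have "- exp (a * V) \<le> (if d then b \<bullet> w else 0)" using bw aV ex by auto
  then have "- (1 + \<tau> / MU b) * exp (a * V) \<le> (if d then b \<bullet> w else 0) - exp (b \<bullet> w) / MU b * integral {0..y} (\<lambda>_. 1)"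
    using E by (simp add: algebra_simps)
  moreover have "qcor MU y d w (\<lambda>_. 1) b = ereal ((if d then b \<bullet> w else 0) - exp (b \<bullet> w) / MU b * integral {0..y} (\<lambda>_. 1))"
    unfolding qcor_def by (cases d) auto
  ultimately show ?thesis by simp
qed

lemma indep_rv_var:
  fixes X Y :: "'a \<Rightarrow> 'b::topological_space"
  assumes P: "prob_space M" and mX[measurable]: "X \<in> borel_measurable M" and mY[measurable]: "Y \<in> borel_measurable M"
    and ind: "indep_rv M X Y"
  shows "prob_space.indep_var M borel X borel Y"
proof -
  interpret prob_space M by fact
  have iset: "indep_set {X -` A \<inter> space M |A. A \<in> sets borel} {Y -` A \<inter> space M |A. A \<in> sets borel}"
    unfolding indep_sets2_eq
  proof (intro conjI ballI)
    show "{X -` A \<inter> space M |A. A \<in> sets borel} \<subseteq> events" by auto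
    show "{Y -` A \<inter> space M |A. A \<in> sets borel} \<subseteq> events" by auto
    fix a b assume a: "a \<in> {X -` A \<inter> space M |A. A \<in> sets borel}" and b: "b \<in> {Y -` A \<inter> space M |A. A \<in> sets borel}"
    then obtain A B where A: "A \<in> sets borel" "a = X -` A \<inter> space M" and B: "B \<in> sets borel" "b = Y -` B \<inter> space M"
      by blast
    have "prob (a \<inter> b) = measure M {\<omega> \<in> space M. X \<omega> \<in> A \<and> Y \<omega> \<in> B}"
      using A B by (auto intro!: arg_cong[where f="measure M"])
    also have "\<dots> = measure M {\<omega> \<in> space M. X \<omega> \<in> A} * measure M {\<omega> \<in> space M. Y \<omega> \<in> B}"
      using ind A B unfolding indep_rv_def by blast
    also have "\<dots> = prob a * prob b"
      using A B by (auto intro!: arg_cong2[where f="(*)"] arg_cong[where f="measure M"])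
    finally show "prob (a \<inter> b) = prob a * prob b" .
  qed
  have eq: "(\<lambda>i. {case_bool X Y i -` A \<inter> space M |A. A \<in> sets (case_bool borel borel i)})
      = case_bool {X -` A \<inter> space M |A. A \<in> sets borel} {Y -` A \<inter> space M |A. A \<in> sets borel}"
    by (rule ext) (simp split: bool.split)
  show ?thesis
    unfolding indep_var_def indep_vars_def2 eq
    using iset unfolding indep_set_def by (auto split: bool.split)
qed

lemma iid_AE:
  fixes \<xi> :: "nat \<Rightarrow> 'a \<Rightarrow> 'b::topological_space"
  assumes P: "prob_space M" and m: "\<And>i. \<xi> i \<in> borel_measurable M"
    and dist: "\<And>i. distr M borel (\<xi> i) = distr M borel (\<xi> 0)"
    and A: "A \<in> sets borel" and ae: "AE \<omega> in M. \<xi> 0 \<omega> \<in> A"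
  shows "AE \<omega> in M. \<xi> i \<omega> \<in> A"
proof -
  interpret prob_space M by fact
  have [measurable]: "\<xi> j \<in> borel_measurable M" for j by (rule m)
  have [measurable]: "A \<in> sets borel" by (rule A)
  have "prob {\<omega>\<in>space M. \<xi> 0 \<omega> \<in> A} = 1"
    using ae by (subst prob_Collect_eq_1) auto
  then have "prob {\<omega>\<in>space M. \<xi> i \<omega> \<in> A} = 1"
    using iid_measure[of \<xi> i M A, OF m m dist A] by simp
  then show ?thesis by (subst (asm) prob_Collect_eq_1) auto
qed

lemma avg_le:
  fixes q :: "nat \<Rightarrow> ereal"
  assumes n: "0 < n" and q: "\<And>i. i < n \<Longrightarrow> q i \<le> ereal (u i)" and s: "(\<Sum>i<n. u i) \<le> real n * s"
  shows "ereal (1 / real n) * (\<Sum>i<n. q i) \<le> ereal s"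
proof -
  have "(\<Sum>i<n. q i) \<le> (\<Sum>i<n. ereal (u i))" by (rule sum_mono) (use q in auto)
  also have "\<dots> = ereal (\<Sum>i<n. u i)" by simp
  also have "\<dots> \<le> ereal (real n * s)" using s by simp
  finally have "ereal (1 / real n) * (\<Sum>i<n. q i) \<le> ereal (1 / real n) * ereal (real n * s)"
    by (rule ereal_mult_left_mono) simp
  also have "\<dots> = ereal s" using n by simp
  finally show ?thesis .
qed

lemma avg_ge:
  fixes q :: "nat \<Rightarrow> ereal"
  assumes n: "0 < n" and q: "\<And>i. i < n \<Longrightarrow> ereal (u i) \<le> q i" and s: "real n * s \<le> (\<Sum>i<n. u i)"
  shows "ereal s \<le> ereal (1 / real n) * (\<Sum>i<n. q i)"
proof -
  have "ereal (real n * s) \<le> ereal (\<Sum>i<n. u i)" using s by simp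
  also have "\<dots> = (\<Sum>i<n. ereal (u i))" by simp
  also have "\<dots> \<le> (\<Sum>i<n. q i)" by (rule sum_mono) (use q in auto)
  finally have "ereal (1 / real n) * ereal (real n * s) \<le> ereal (1 / real n) * (\<Sum>i<n. q i)"
    by (rule ereal_mult_left_mono) simp
  moreover have "ereal (1 / real n) * ereal (real n * s) = ereal s" using n by simp
  ultimately show ?thesis by simp
qed


lemma fst_borel[measurable]: "fst \<in> (borel :: ('a::second_countable_topology \<times> 'b::second_countable_topology) measure) \<rightarrow>\<^sub>M borel"
  using measurable_fst[of "borel::'a measure" "borel::'b measure"] by (simp add: borel_prod)

lemma snd_borel[measurable]: "snd \<in> (borel :: ('a::second_countable_topology \<times> 'b::second_countable_topology) measure) \<rightarrow>\<^sub>M borel"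
  using measurable_snd[of "borel::'a measure" "borel::'b measure"] by (simp add: borel_prod)


theorem mainTheorem2:
  fixes M :: "'w measure"
    and T C :: "nat \<Rightarrow> 'w \<Rightarrow> real"
    and X U :: "nat \<Rightarrow> 'w \<Rightarrow> real^'m"
    and \<tau> L :: real
    and \<Theta> :: "(real^'m) set"
    and lam0 :: "real \<Rightarrow> real"
    and \<beta>0 :: "real^'m"
  assumes prob: "prob_space M"
    and tau_pos: "0 < \<tau>"
    and meas: "\<And>i. (\<lambda>\<omega>. ((T i \<omega>, X i \<omega>), C i \<omega>, U i \<omega>)) \<in> borel_measurable M"
    and iid_indep: "prob_space.indep_vars M (\<lambda>_. borel)
                      (\<lambda>i \<omega>. ((T i \<omega>, X i \<omega>), C i \<omega>, U i \<omega>)) UNIV"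
    and iid_distr: "\<And>i. distr M borel (\<lambda>\<omega>. ((T i \<omega>, X i \<omega>), C i \<omega>, U i \<omega>))
                        = distr M borel (\<lambda>\<omega>. ((T 0 \<omega>, X 0 \<omega>), C 0 \<omega>, U 0 \<omega>))"
    and indep1: "\<And>i. indep_rv M (\<lambda>\<omega>. (T i \<omega>, X i \<omega>)) (\<lambda>\<omega>. (C i \<omega>, U i \<omega>))"
    and indep2: "\<And>i. indep_rv M (C i) (U i)"
    and hazard: "\<And>i t B. t \<in> {0..\<tau>} \<Longrightarrow> B \<in> sets borel \<Longrightarrow>
        measure M {\<omega> \<in> space M. t < T i \<omega> \<and> X i \<omega> \<in> B}
        = (\<integral>\<omega>. indicator B (X i \<omega>) *
                 exp (- integral {0..t} lam0 * exp (\<beta>0 \<bullet> X i \<omega>)) \<partial>M)"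
    and C_range: "AE \<omega> in M. 0 \<le> C 0 \<omega>"
    and L_pos: "0 < L"
    and Theta_compact: "compact \<Theta>"
    and mom: "\<exists>\<epsilon>>0. let D = (SUP b\<in>\<Theta>. norm b) + \<epsilon> in
                 integrable M (\<lambda>\<omega>. exp (D * norm (U 0 \<omega>))) \<and>
                 integrable M (\<lambda>\<omega>. exp (D * norm (X 0 \<omega>)))"
    and U_mean: "(\<integral>\<omega>. U 0 \<omega> \<partial>M) = 0"
    and C_le_tau: "measure M {\<omega> \<in> space M. \<tau> < C 0 \<omega>} = 0"
    and C_near_tau: "\<And>\<epsilon>. 0 < \<epsilon> \<Longrightarrow> measure M {\<omega> \<in> space M. \<tau> - \<epsilon> < C 0 \<omega>} > 0"
    and cov_pd: "\<And>a. a \<noteq> 0 \<Longrightarrow> (\<Sum>i\<in>UNIV. \<Sum>j\<in>UNIV. a $ i * a $ j * covmat M (X 0) i j) > 0"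
    and lam0_K: "lam0 \<in> Klam L \<tau>"
    and beta0_Theta: "\<beta>0 \<in> \<Theta>"
    and lam0_pos: "\<And>t. t \<in> {0..\<tau>} \<Longrightarrow> 0 < lam0 t"
  shows "\<exists>R0. (\<forall>t\<in>{0..\<tau>}. lam0 t < R0) \<and>
           (\<forall>R\<ge>R0. AE \<omega> in M. \<exists>n0. \<forall>n\<ge>n0.
              (SUP p\<in>KlamR L \<tau> R \<times> \<Theta>. Qcor M T X C U n (fst p) (snd p) \<omega>)
              > (SUP p\<in>(Klam L \<tau> \<times> \<Theta>) - (KlamR L \<tau> R \<times> \<Theta>).
                    Qcor M T X C U n (fst p) (snd p) \<omega>))
         \<and> (AE \<omega> in M. ((\<lambda>R. limsup (\<lambda>n. SUP p\<in>(Klam L \<tau> \<times> \<Theta>) - (KlamR L \<tau> R \<times> \<Theta>).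
                    Qcor M T X C U n (fst p) (snd p) \<omega>)) \<longlongrightarrow> -\<infinity>) at_top)"
proof -
  interpret prob_space M by (rule prob)
  define \<xi> where "\<xi> = (\<lambda>i \<omega>. ((T i \<omega>, X i \<omega>), C i \<omega>, U i \<omega>))"
  have m\<xi>: "\<And>i. \<xi> i \<in> borel_measurable M" unfolding \<xi>_def using meas by simp
  have m\<xi>'[measurable]: "\<xi> i \<in> borel_measurable M" for i by (rule m\<xi>)
  have ind\<xi>: "\<And>i j. i \<noteq> j \<Longrightarrow> indep_var borel (\<xi> i) borel (\<xi> j)"
    using indep_pair[OF prob iid_indep[folded \<xi>_def]] .
  have dist\<xi>: "\<And>i. distr M borel (\<xi> i) = distr M borel (\<xi> 0)" unfolding \<xi>_def using iid_distr by simp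
  have mT[measurable]: "T i \<in> borel_measurable M" for i
  proof -
    have "(\<lambda>\<omega>. fst (fst (\<xi> i \<omega>))) \<in> borel_measurable M" by measurable
    then show ?thesis by (simp add: \<xi>_def)
  qed
  have mX[measurable]: "X i \<in> borel_measurable M" for i
  proof -
    have "(\<lambda>\<omega>. snd (fst (\<xi> i \<omega>))) \<in> borel_measurable M" by measurable
    then show ?thesis by (simp add: \<xi>_def)
  qed
  have mC[measurable]: "C i \<in> borel_measurable M" for i
  proof -
    have "(\<lambda>\<omega>. fst (snd (\<xi> i \<omega>))) \<in> borel_measurable M" by measurable
    then show ?thesis by (simp add: \<xi>_def)
  qed
  have mU[measurable]: "U i \<in> borel_measurable M" for i
  proof -
    have "(\<lambda>\<omega>. snd (snd (\<xi> i \<omega>))) \<in> borel_measurable M" by measurable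
    then show ?thesis by (simp add: \<xi>_def)
  qed
  obtain Bb where Bb: "\<And>b. b \<in> \<Theta> \<Longrightarrow> norm b \<le> Bb"
    using compact_imp_bounded[OF Theta_compact] unfolding bounded_iff by blast
  have bdd: "bdd_above (norm ` \<Theta>)" using Bb by (auto intro!: bdd_aboveI)
  define Bm where "Bm = (SUP b\<in>\<Theta>. norm b)"
  have nb: "\<And>b. b \<in> \<Theta> \<Longrightarrow> norm b \<le> Bm" unfolding Bm_def using bdd by (intro cSUP_upper)
  have Bm0: "0 \<le> Bm" using nb[OF beta0_Theta] norm_ge_zero[of \<beta>0] by linarith
  obtain \<epsilon> where \<epsilon>: "0 < \<epsilon>" and intU: "integrable M (\<lambda>\<omega>. exp ((Bm + \<epsilon>) * norm (U 0 \<omega>)))"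
      and intX: "integrable M (\<lambda>\<omega>. exp ((Bm + \<epsilon>) * norm (X 0 \<omega>)))"
    using mom unfolding Let_def Bm_def by blast
  define D where "D = Bm + \<epsilon>"
  define a where "a = Bm + \<epsilon> / 2"
  define p where "p = D / a"
  have a0: "0 < a" "Bm \<le> a" "a \<le> D" "0 < D" using Bm0 \<epsilon> unfolding a_def D_def by auto
  have p12: "1 < p" "p \<le> 2" using Bm0 \<epsilon> a0 unfolding p_def D_def a_def by (auto simp: field_simps)
  have pa: "p * a = D" using a0 unfolding p_def by simp
  have indTXCU: "indep_var borel (\<lambda>\<omega>. (T 0 \<omega>, X 0 \<omega>)) borel (\<lambda>\<omega>. (C 0 \<omega>, U 0 \<omega>))"
    by (rule indep_rv_var[OF prob _ _ indep1]) measurable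
  have indXU: "indep_var borel (X 0) borel (U 0)"
    using indep_var_compose[OF indTXCU, of snd borel snd borel] by (simp add: comp_def)
  define Vf where "Vf = (\<lambda>z::(real \<times> (real^'m)) \<times> real \<times> (real^'m). norm (snd (fst z)) + norm (snd (snd z)))"
  have Vfm[measurable]: "Vf \<in> borel_measurable borel" unfolding Vf_def by measurable
  have V\<xi>: "Vf (\<xi> i \<omega>) = norm (X i \<omega>) + norm (U i \<omega>)" for i \<omega> unfolding Vf_def \<xi>_def by simp
  have V0: "0 \<le> Vf z" for z unfolding Vf_def by simp
  define Ff where "Ff = (\<lambda>z. exp (a * Vf z))"
  have Ffm[measurable]: "Ff \<in> borel_measurable borel" unfolding Ff_def by measurable
  have intD: "integrable M (\<lambda>\<omega>. exp (D * norm (X 0 \<omega>)) * exp (D * norm (U 0 \<omega>)))"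
    by (rule indep_fun_integral(2)[OF prob indXU, of "\<lambda>x. exp (D * norm x)" "\<lambda>x. exp (D * norm x)"])
       (use intX intU in \<open>auto simp: D_def\<close>)
  have intFp: "integrable M (\<lambda>\<omega>. Ff (\<xi> 0 \<omega>) powr p)"
  proof -
    have "Ff (\<xi> 0 \<omega>) powr p = exp (D * norm (X 0 \<omega>)) * exp (D * norm (U 0 \<omega>))" for \<omega>
    proof -
      have "Ff (\<xi> 0 \<omega>) powr p = exp (p * (a * Vf (\<xi> 0 \<omega>)))" unfolding Ff_def powr_def by simp
      also have "p * (a * Vf (\<xi> 0 \<omega>)) = D * norm (X 0 \<omega>) + D * norm (U 0 \<omega>)"
        unfolding V\<xi> mult.assoc[symmetric] pa by (simp add: algebra_simps)
      finally show ?thesis by (simp add: exp_add)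
    qed
    then show ?thesis using intD by simp
  qed
  have intF: "integrable M (\<lambda>\<omega>. Ff (\<xi> 0 \<omega>))"
  proof (rule Bochner_Integration.integrable_bound[OF intD])
    show "AE \<omega> in M. norm (Ff (\<xi> 0 \<omega>)) \<le> norm (exp (D * norm (X 0 \<omega>)) * exp (D * norm (U 0 \<omega>)))"
    proof (intro AE_I2)
      fix \<omega>
      have "a * Vf (\<xi> 0 \<omega>) \<le> D * Vf (\<xi> 0 \<omega>)" using a0 V0 by (intro mult_right_mono) auto
      then show "norm (Ff (\<xi> 0 \<omega>)) \<le> norm (exp (D * norm (X 0 \<omega>)) * exp (D * norm (U 0 \<omega>)))"
        unfolding Ff_def V\<xi> by (simp add: exp_add[symmetric] algebra_simps)
    qed
  qed measurable
  have Ff0: "\<And>z. 0 \<le> Ff z" unfolding Ff_def by simp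
  define K where "K = 2 * ((\<integral>\<omega>. Ff (\<xi> 0 \<omega>) \<partial>M) + 1)"
  have "0 \<le> (\<integral>\<omega>. Ff (\<xi> 0 \<omega>) \<partial>M)" by (rule integral_nonneg_AE) (simp add: Ff_def)
  then have K0: "0 < K" unfolding K_def by (smt (verit))
  have AE1: "AE \<omega> in M. eventually (\<lambda>n. (\<Sum>i<n. Ff (\<xi> i \<omega>)) \<le> K * real n) sequentially"
    unfolding K_def by (rule slln_upper[of M \<xi>, OF prob m\<xi> ind\<xi> dist\<xi> Ffm Ff0 p12 intFp intF])
  define Gf where "Gf = (\<lambda>z::(real \<times> (real^'m)) \<times> real \<times> (real^'m).
      exp (- Bm * Vf z) * max 0 (min (min (fst (fst z)) (fst (snd z))) \<tau>))"
  have Gfm[measurable]: "Gf \<in> borel_measurable borel" unfolding Gf_def by measurable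
  have Gf0: "0 \<le> Gf z" for z unfolding Gf_def by simp
  have Gfb: "Gf z \<le> \<tau>" for z
  proof -
    have "exp (- Bm * Vf z) \<le> 1" using Bm0 V0[of z] by simp
    moreover have "max 0 (min (min (fst (fst z)) (fst (snd z))) \<tau>) \<le> \<tau>" using tau_pos by simp
    ultimately have "exp (- Bm * Vf z) * max 0 (min (min (fst (fst z)) (fst (snd z))) \<tau>) \<le> 1 * \<tau>"
      by (intro mult_mono) auto
    then show ?thesis unfolding Gf_def by simp
  qed
  have PT: "AE \<omega> in M. 0 < T i \<omega>" for i
  proof -
    have "measure M {\<omega> \<in> space M. 0 < T i \<omega> \<and> X i \<omega> \<in> UNIV}
        = (\<integral>\<omega>. indicator UNIV (X i \<omega>) * exp (- integral {0..0} lam0 * exp (\<beta>0 \<bullet> X i \<omega>)) \<partial>M)"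
      by (rule hazard) (use tau_pos in auto)
    also have "\<dots> = 1" by (simp add: prob_space)
    finally have "prob {\<omega> \<in> space M. 0 < T i \<omega>} = 1" by simp
    then show ?thesis by (subst (asm) prob_Collect_eq_1) auto
  qed
  have PC0: "AE \<omega> in M. 0 \<le> C i \<omega>" for i
  proof -
    have A: "{z::(real \<times> (real^'m)) \<times> real \<times> (real^'m). 0 \<le> fst (snd z)} \<in> sets borel" by measurable
    have "AE \<omega> in M. \<xi> 0 \<omega> \<in> {z. 0 \<le> fst (snd z)}" using C_range by (simp add: \<xi>_def)
    from iid_AE[of M \<xi>, OF prob m\<xi> dist\<xi> A this, of i] show ?thesis by (simp add: \<xi>_def)
  qed
  have PCt: "AE \<omega> in M. C i \<omega> \<le> \<tau>" for i
  proof -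
    have A: "{z::(real \<times> (real^'m)) \<times> real \<times> (real^'m). fst (snd z) \<le> \<tau>} \<in> sets borel" by measurable
    have "AE \<omega> in M. \<not> \<tau> < C 0 \<omega>" using C_le_tau by (subst (asm) prob_Collect_eq_0) auto
    then have "AE \<omega> in M. \<xi> 0 \<omega> \<in> {z. fst (snd z) \<le> \<tau>}" by (auto simp: \<xi>_def not_less)
    from iid_AE[of M \<xi>, OF prob m\<xi> dist\<xi> A this, of i] show ?thesis by (simp add: \<xi>_def)
  qed
  have AE3: "AE \<omega> in M. \<forall>i. 0 < T i \<omega> \<and> 0 \<le> C i \<omega> \<and> C i \<omega> \<le> \<tau>"
    unfolding AE_all_countable using PT PC0 PCt by (auto intro: AE_conjI)
  have intG: "integrable M (\<lambda>\<omega>. Gf (\<xi> 0 \<omega>))"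
    by (rule integrable_const_bound[where B=\<tau>]) (use Gf0 Gfb tau_pos in auto)
  have mug: "0 < (\<integral>\<omega>. Gf (\<xi> 0 \<omega>) \<partial>M)"
  proof -
    have nn: "0 \<le> (\<integral>\<omega>. Gf (\<xi> 0 \<omega>) \<partial>M)" by (rule integral_nonneg_AE) (simp add: Gf0)
    have "(\<integral>\<omega>. Gf (\<xi> 0 \<omega>) \<partial>M) \<noteq> 0"
    proof
      assume "(\<integral>\<omega>. Gf (\<xi> 0 \<omega>) \<partial>M) = 0"
      then have "AE \<omega> in M. Gf (\<xi> 0 \<omega>) = 0"
        using integral_nonneg_eq_0_iff_AE[OF intG] Gf0 by auto
      then have "AE \<omega> in M. \<not> 0 < C 0 \<omega>"
        using PT[of 0]
      proof eventually_elim
        case (elim \<omega>)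
        show ?case
        proof
          assume c: "0 < C 0 \<omega>"
          have "0 < min (min (T 0 \<omega>) (C 0 \<omega>)) \<tau>" using c elim(2) tau_pos by simp
          then have "0 < Gf (\<xi> 0 \<omega>)" unfolding Gf_def \<xi>_def by simp
          then show False using elim(1) by simp
        qed
      qed
      then have "prob {\<omega>\<in>space M. 0 < C 0 \<omega>} = 0" by (subst prob_Collect_eq_0) auto
      with C_near_tau[of \<tau>] tau_pos show False by simp
    qed
    with nn show ?thesis by simp
  qed
  define c0 where "c0 = (\<integral>\<omega>. Gf (\<xi> 0 \<omega>) \<partial>M) / 4"
  have c00: "0 < c0" unfolding c0_def using mug by simp
  have AE2: "AE \<omega> in M. eventually (\<lambda>n. c0 * real n \<le> (\<Sum>i<n. Gf (\<xi> i \<omega>))) sequentially"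
    unfolding c0_def by (rule slln_lower[of M \<xi>, OF prob m\<xi> ind\<xi> dist\<xi> Gfm Gf0 Gfb mug])
  have intUD: "integrable M (\<lambda>\<omega>. exp (D * norm (U 0 \<omega>)))" using intU unfolding D_def .
  define Mx where "Mx = (\<integral>\<omega>. exp (D * norm (U 0 \<omega>)) \<partial>M)"
  have mgf_bd: "0 < mgf M (U 0) b \<and> mgf M (U 0) b \<le> Mx" if b: "b \<in> \<Theta>" for b
  proof -
    have le: "exp (b \<bullet> U 0 \<omega>) \<le> exp (D * norm (U 0 \<omega>))" for \<omega>
    proof -
      have "b \<bullet> U 0 \<omega> \<le> norm b * norm (U 0 \<omega>)" by (rule Cauchy_Schwarz_ineq2[THEN order.trans[OF abs_ge_self]])
      also have "\<dots> \<le> D * norm (U 0 \<omega>)" using nb[OF b] a0 by (intro mult_right_mono) auto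
      finally show ?thesis by simp
    qed
    have int: "integrable M (\<lambda>\<omega>. exp (b \<bullet> U 0 \<omega>))"
      by (rule Bochner_Integration.integrable_bound[OF intUD]) (use le in auto)
    have "mgf M (U 0) b \<le> Mx" unfolding mgf_def Mx_def by (rule integral_mono[OF int intUD]) (rule le)
    moreover have "0 < mgf M (U 0) b"
    proof -
      have nn: "0 \<le> mgf M (U 0) b" unfolding mgf_def by (rule integral_nonneg_AE) simp
      have "mgf M (U 0) b \<noteq> 0"
      proof
        assume "mgf M (U 0) b = 0"
        then have "AE \<omega> in M. exp (b \<bullet> U 0 \<omega>) = 0"
          using integral_nonneg_eq_0_iff_AE[OF int] unfolding mgf_def by auto
        then have "AE \<omega> in M. False" by simp
        then show False by simp
      qed
      with nn show ?thesis by simp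
    qed
    ultimately show ?thesis by simp
  qed
  define M0 where "M0 = mgf M (U 0) \<beta>0"
  have M00: "0 < M0" unfolding M0_def using mgf_bd[OF beta0_Theta] by simp
  have Mx0: "0 < Mx" using mgf_bd[OF beta0_Theta] by simp
  define G where "G = (1 + \<tau> / M0) * K"
  define e where "e = c0 / (2 * Mx)"
  have e0: "0 < e" unfolding e_def using c00 Mx0 by simp
  define Hc where "Hc = 3 * e * L * \<tau> - 1 - ln e + K"
  define R0 where "R0 = max (max 1 (L * \<tau>)) (max (lam0 0 + L * \<tau> + 1) ((Hc + G) / e + 1))"
  have R0ge: "1 \<le> R0" "L * \<tau> \<le> R0" "lam0 0 + L * \<tau> < R0" "(Hc + G) / e < R0"
    unfolding R0_def by auto
  have Lt: "0 \<le> L * \<tau>" using L_pos tau_pos by simp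
  have GOOD: "AE \<omega> in M. \<exists>n0. \<forall>n\<ge>n0. ereal (- G) \<le> Qcor M T X C U n (\<lambda>_. 1) \<beta>0 \<omega> \<and>
      (\<forall>R\<ge>R0. \<forall>pp\<in>(Klam L \<tau> \<times> \<Theta>) - (KlamR L \<tau> R \<times> \<Theta>).
          Qcor M T X C U n (fst pp) (snd pp) \<omega> \<le> ereal (- e * R + Hc))"
    using AE1 AE2 AE3
  proof eventually_elim
    case (elim \<omega>)
    obtain n1 where n1: "\<And>n. n \<ge> n1 \<Longrightarrow> (\<Sum>i<n. Ff (\<xi> i \<omega>)) \<le> K * real n"
      using elim(1) unfolding eventually_sequentially by blast
    obtain n2 where n2: "\<And>n. n \<ge> n2 \<Longrightarrow> c0 * real n \<le> (\<Sum>i<n. Gf (\<xi> i \<omega>))"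
      using elim(2) unfolding eventually_sequentially by blast
    define Y where "Y i = min (T i \<omega>) (C i \<omega>)" for i
    have Y: "0 \<le> Y i" "Y i \<le> \<tau>" for i
    proof -
      have "0 < T i \<omega>" "0 \<le> C i \<omega>" "C i \<omega> \<le> \<tau>" using elim(3) by auto
      then show "0 \<le> Y i" "Y i \<le> \<tau>" unfolding Y_def by auto
    qed
    have GY: "Gf (\<xi> i \<omega>) = exp (- Bm * Vf (\<xi> i \<omega>)) * Y i" for i
      unfolding Gf_def Y_def using Y[of i] by (simp add: \<xi>_def Y_def)
    have nw: "norm (X i \<omega> + U i \<omega>) \<le> Vf (\<xi> i \<omega>)" for i unfolding V\<xi> by (rule norm_triangle_ineq)
    show ?case
    proof (intro exI[of _ "max (max n1 n2) 1"] allI impI conjI ballI)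
      fix n assume n: "max (max n1 n2) 1 \<le> n"
      then have n0: "0 < n" and nn1: "n \<ge> n1" and nn2: "n \<ge> n2" by auto
      show "ereal (- G) \<le> Qcor M T X C U n (\<lambda>_. 1) \<beta>0 \<omega>"
        unfolding Qcor_def
      proof (rule avg_ge[OF n0, where u="\<lambda>i. - (1 + \<tau> / M0) * Ff (\<xi> i \<omega>)"])
        fix i assume "i < n"
        show "ereal (- (1 + \<tau> / M0) * Ff (\<xi> i \<omega>)) \<le> qcor (mgf M (U 0)) (min (T i \<omega>) (C i \<omega>)) (T i \<omega> \<le> C i \<omega>) (X i \<omega> + U i \<omega>) (\<lambda>_. 1) \<beta>0"
          unfolding Ff_def M0_def
          by (rule qcor_lower) (use Y[of i] tau_pos M00 nb[OF beta0_Theta] a0 nw[of i] in \<open>auto simp: Y_def M0_def\<close>)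
      next
        have "real n * (- G) = - (1 + \<tau> / M0) * (K * real n)" unfolding G_def by (simp add: algebra_simps)
        also have "\<dots> \<le> - (1 + \<tau> / M0) * (\<Sum>i<n. Ff (\<xi> i \<omega>))"
        proof (rule mult_left_mono_neg)
          have "0 \<le> \<tau> / M0" using M00 tau_pos by simp
          then show "- (1 + \<tau> / M0) \<le> 0" by linarith
        qed (use n1[OF nn1] in auto)
        also have "\<dots> = (\<Sum>i<n. - (1 + \<tau> / M0) * Ff (\<xi> i \<omega>))" by (simp add: sum_distrib_left)
        finally show "real n * (- G) \<le> (\<Sum>i<n. - (1 + \<tau> / M0) * Ff (\<xi> i \<omega>))" .
      qed
      fix R pp assume R: "R0 \<le> R" and pp: "pp \<in> (Klam L \<tau> \<times> \<Theta>) - (KlamR L \<tau> R \<times> \<Theta>)"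
      obtain lam b where pp_eq: "pp = (lam, b)" and lam: "lam \<in> Klam L \<tau>" and b: "b \<in> \<Theta>"
        and nR: "lam \<notin> KlamR L \<tau> R" using pp by auto
      obtain t where t: "t \<in> {0..\<tau>}" and tR: "R < lam t"
        using nR lam unfolding KlamR_def Klam_def by force
      define m where "m = lam t"
      have mR: "R < m" using tR unfolding m_def .
      have m1: "1 \<le> m" "L * \<tau> \<le> m" using mR R R0ge by auto
      define u where "u i = ln (m + L * \<tau>) + Ff (\<xi> i \<omega>) - (m - L * \<tau>) / Mx * Gf (\<xi> i \<omega>)" for i
      define st where "st = ln (m + L * \<tau>) + K - (m - L * \<tau>) / Mx * c0"
      have "Qcor M T X C U n lam b \<omega> \<le> ereal st"
        unfolding Qcor_def
      proof (rule avg_le[OF n0, where u=u])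
        fix i assume "i < n"
        show "qcor (mgf M (U 0)) (min (T i \<omega>) (C i \<omega>)) (T i \<omega> \<le> C i \<omega>) (X i \<omega> + U i \<omega>) lam b \<le> ereal (u i)"
          unfolding u_def Ff_def GY m_def Y_def
          by (rule qcor_upper) (use lam L_pos t m1 Y[of i] mgf_bd[OF b] nb[OF b] Bm0 a0 nw[of i] in \<open>auto simp: m_def Y_def\<close>)
      next
        have "(\<Sum>i<n. u i) = real n * ln (m + L * \<tau>) + (\<Sum>i<n. Ff (\<xi> i \<omega>)) - (m - L * \<tau>) / Mx * (\<Sum>i<n. Gf (\<xi> i \<omega>))"
          unfolding u_def by (simp add: sum.distrib sum_subtractf sum_distrib_left)
        also have "\<dots> \<le> real n * ln (m + L * \<tau>) + K * real n - (m - L * \<tau>) / Mx * (c0 * real n)"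
        proof -
          have "(m - L * \<tau>) / Mx * (c0 * real n) \<le> (m - L * \<tau>) / Mx * (\<Sum>i<n. Gf (\<xi> i \<omega>))"
            using n2[OF nn2] m1 Mx0 by (intro mult_left_mono) auto
          then show ?thesis using n1[OF nn1] by linarith
        qed
        also have "\<dots> = real n * st" unfolding st_def by (simp add: algebra_simps)
        finally show "(\<Sum>i<n. u i) \<le> real n * st" .
      qed
      also have "ereal st \<le> ereal (- e * R + Hc)"
      proof -
        have lnb: "ln (m + L * \<tau>) \<le> e * (m + L * \<tau>) - 1 - ln e"
        proof -
          have pos: "0 < m + L * \<tau>" using m1 Lt by linarith
          have "ln (e * (m + L * \<tau>)) \<le> e * (m + L * \<tau>) - 1" by (rule ln_le_minus_one) (use e0 pos in simp)
          then show ?thesis using e0 pos by (simp add: ln_mult)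
        qed
        have ce: "c0 / Mx = 2 * e" unfolding e_def using Mx0 by simp
        have "st = ln (m + L * \<tau>) + K - (m - L * \<tau>) * (2 * e)" unfolding st_def ce[symmetric] by simp
        also have "\<dots> \<le> - e * m + Hc" using lnb unfolding Hc_def by (simp add: algebra_simps)
        also have "\<dots> \<le> - e * R + Hc" using mR e0 by simp
        finally show ?thesis by simp
      qed
      finally show "Qcor M T X C U n (fst pp) (snd pp) \<omega> \<le> ereal (- e * R + Hc)" using pp_eq by simp
    qed
  qed
  have one_in: "((\<lambda>_. 1::real), \<beta>0) \<in> KlamR L \<tau> R \<times> \<Theta>" if "1 \<le> R" for R
    using that beta0_Theta L_pos unfolding KlamR_def Klam_def by auto
  have lam0b: "\<forall>t\<in>{0..\<tau>}. lam0 t < R0"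
  proof
    fix t assume t: "t \<in> {0..\<tau>}"
    have z: "(0::real) \<in> {0..\<tau>}" using tau_pos by simp
    have "\<bar>lam0 t - lam0 0\<bar> \<le> L * \<bar>t - 0\<bar>" using lam0_K t z unfolding Klam_def by blast
    moreover have "L * \<bar>t - 0\<bar> \<le> L * \<tau>" using t L_pos by (intro mult_left_mono) auto
    ultimately show "lam0 t < R0" using R0ge by linarith
  qed
  have part1: "\<forall>R\<ge>R0. AE \<omega> in M. \<exists>n0. \<forall>n\<ge>n0.
              (SUP p\<in>KlamR L \<tau> R \<times> \<Theta>. Qcor M T X C U n (fst p) (snd p) \<omega>)
              > (SUP p\<in>(Klam L \<tau> \<times> \<Theta>) - (KlamR L \<tau> R \<times> \<Theta>).
                    Qcor M T X C U n (fst p) (snd p) \<omega>)"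
  proof (intro allI impI)
    fix R assume R: "R0 \<le> R"
    show "AE \<omega> in M. \<exists>n0. \<forall>n\<ge>n0.
              (SUP p\<in>KlamR L \<tau> R \<times> \<Theta>. Qcor M T X C U n (fst p) (snd p) \<omega>)
              > (SUP p\<in>(Klam L \<tau> \<times> \<Theta>) - (KlamR L \<tau> R \<times> \<Theta>).
                    Qcor M T X C U n (fst p) (snd p) \<omega>)"
      using GOOD
    proof eventually_elim
      case (elim \<omega>)
      then obtain n0 where n0: "\<And>n. n \<ge> n0 \<Longrightarrow> ereal (- G) \<le> Qcor M T X C U n (\<lambda>_. 1) \<beta>0 \<omega> \<and>
        (\<forall>R\<ge>R0. \<forall>pp\<in>(Klam L \<tau> \<times> \<Theta>) - (KlamR L \<tau> R \<times> \<Theta>).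
          Qcor M T X C U n (fst pp) (snd pp) \<omega> \<le> ereal (- e * R + Hc))" by blast
      show ?case
      proof (intro exI[of _ n0] allI impI)
        fix n assume n: "n0 \<le> n"
        have "(SUP p\<in>(Klam L \<tau> \<times> \<Theta>) - (KlamR L \<tau> R \<times> \<Theta>). Qcor M T X C U n (fst p) (snd p) \<omega>) \<le> ereal (- e * R + Hc)"
          using n0[OF n] R by (intro SUP_least) auto
        also have "\<dots> < ereal (- G)"
        proof -
          have "(Hc + G) / e < R" using R R0ge by linarith
          then have "Hc + G < e * R" using e0 by (simp add: field_simps)
          then show ?thesis by simp
        qed
        also have "\<dots> \<le> Qcor M T X C U n (\<lambda>_. 1) \<beta>0 \<omega>" using n0[OF n] by blast
        also have "\<dots> \<le> (SUP p\<in>KlamR L \<tau> R \<times> \<Theta>. Qcor M T X C U n (fst p) (snd p) \<omega>)"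
          using SUP_upper[OF one_in, of R "\<lambda>p. Qcor M T X C U n (fst p) (snd p) \<omega>"] R R0ge by simp
        finally show "(SUP p\<in>KlamR L \<tau> R \<times> \<Theta>. Qcor M T X C U n (fst p) (snd p) \<omega>)
              > (SUP p\<in>(Klam L \<tau> \<times> \<Theta>) - (KlamR L \<tau> R \<times> \<Theta>). Qcor M T X C U n (fst p) (snd p) \<omega>)" .
      qed
    qed
  qed
  have part2: "AE \<omega> in M. ((\<lambda>R. limsup (\<lambda>n. SUP p\<in>(Klam L \<tau> \<times> \<Theta>) - (KlamR L \<tau> R \<times> \<Theta>).
                    Qcor M T X C U n (fst p) (snd p) \<omega>)) \<longlongrightarrow> -\<infinity>) at_top"
    using GOOD
  proof eventually_elim
    case (elim \<omega>)
    then obtain n0 where n0: "\<And>n. n \<ge> n0 \<Longrightarrow>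
        (\<forall>R\<ge>R0. \<forall>pp\<in>(Klam L \<tau> \<times> \<Theta>) - (KlamR L \<tau> R \<times> \<Theta>).
          Qcor M T X C U n (fst pp) (snd pp) \<omega> \<le> ereal (- e * R + Hc))" by blast
    have ls: "limsup (\<lambda>n. SUP p\<in>(Klam L \<tau> \<times> \<Theta>) - (KlamR L \<tau> R \<times> \<Theta>). Qcor M T X C U n (fst p) (snd p) \<omega>)
        \<le> ereal (- e * R + Hc)" if R: "R0 \<le> R" for R
    proof (rule Limsup_bounded)
      show "eventually (\<lambda>n. (SUP p\<in>(Klam L \<tau> \<times> \<Theta>) - (KlamR L \<tau> R \<times> \<Theta>). Qcor M T X C U n (fst p) (snd p) \<omega>)
          \<le> ereal (- e * R + Hc)) sequentially"
        unfolding eventually_sequentially using n0 R by (intro exI[of _ n0] allI impI SUP_least) auto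
    qed
    show ?case
      unfolding tendsto_MInfty
    proof
      fix r :: real
      show "eventually (\<lambda>R. limsup (\<lambda>n. SUP p\<in>(Klam L \<tau> \<times> \<Theta>) - (KlamR L \<tau> R \<times> \<Theta>). Qcor M T X C U n (fst p) (snd p) \<omega>) < ereal r) at_top"
        unfolding eventually_at_top_linorder
      proof (intro exI[of _ "max R0 ((Hc - r + 1) / e)"] allI impI)
        fix R assume R: "max R0 ((Hc - r + 1) / e) \<le> R"
        then have "(Hc - r + 1) / e \<le> R" by simp
        then have "Hc - r + 1 \<le> e * R" using e0 by (simp add: field_simps)
        then have "ereal (- e * R + Hc) < ereal r" by simp
        with ls[of R] R show "limsup (\<lambda>n. SUP p\<in>(Klam L \<tau> \<times> \<Theta>) - (KlamR L \<tau> R \<times> \<Theta>). Qcor M T X C U n (fst p) (snd p) \<omega>) < ereal r"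
          by (meson le_less_trans max.boundedE)
      qed
    qed
  qed
  show ?thesis using lam0b part1 part2 by blast
qed

end
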